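(* For all integers $s\geq 1$ and $n\geq 2$, \begin{align*} a_{8s3^{n}} &\equiv 3^{n+3}\cdot 2s+3^{n+2}\cdot 2s \pmod{3^{n+4}},\\ a_{8s3^{n}+1} &\equiv 3^{n+2}\cdot 5s+3^{n+1}\cdot s+1 \pmod{3^{n+4}},\\ a_{8s3^{n}+2} &\equiv 3^{n+3}\cdot 2s+3^{n+2}\cdot 5s+1 \pmod{3^{n+4}}. \end{align*}
   Context: The Narayana sequence $(a_n)_{n\geq 0}$ is defined by $a_0=0$, $a_1=a_2=1$ and $a_n=a_{n-1}+a_{n-3}$ for all $n\geq 3$. *)

theory Defs
  imports Main "HOL-Number_Theory.Cong"
begin

fun narayana :: "nat \<Rightarrow> int" where
  "narayana 0 = 0"
| "narayana (Suc 0) = 1"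
| "narayana (Suc (Suc 0)) = 1"
| "narayana (Suc (Suc (Suc n))) = narayana (Suc (Suc n)) + narayana n"

end

theory Submission
  imports Defs
begin

definition BB :: "int \<Rightarrow> int \<Rightarrow> int \<Rightarrow> int \<Rightarrow> int \<Rightarrow> int \<Rightarrow> int" where
  "BB x0 x1 x2 y0 y1 y2 = x2*(y2-y1) + x1*(y0-y2+y1) + x0*(y1-y0)"

lemma nar_rec: "narayana (k+3) = narayana (k+2) + narayana k"
  by (simp add: numeral_3_eq_3)

lemma nar_add: "narayana (m+k) = BB (narayana m) (narayana (m+1)) (narayana (m+2)) (narayana k) (narayana (k+1)) (narayana (k+2))"
proof (induction k rule: nat_less_induct)
  case (1 k)
  show ?case
  proof (cases "k < 3")
    case True
    then have "k = 0 \<or> k = 1 \<or> k = 2" by auto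
    then show ?thesis
      using nar_rec[of m] nar_rec[of "m+1"]
      by (auto simp: BB_def numeral_2_eq_2 numeral_3_eq_3 algebra_simps)
  next
    case False
    then obtain j where j: "k = j + 3" by (metis add.commute less_imp_add_positive not_less_eq nat_le_iff_add le_simps(3) linorder_not_le)
    have h1: "narayana (m+(j+2)) = BB (narayana m) (narayana (m+1)) (narayana (m+2)) (narayana (j+2)) (narayana (j+2+1)) (narayana (j+2+2))"
      by (rule 1[rule_format]) (simp add: j)
    have h2: "narayana (m+j) = BB (narayana m) (narayana (m+1)) (narayana (m+2)) (narayana j) (narayana (j+1)) (narayana (j+2))"
      by (rule 1[rule_format]) (simp add: j)
    have e1: "narayana (m+j+3) = narayana (m+j+2) + narayana (m+j)" by (rule nar_rec)
    have e2: "narayana (j+2+3) = narayana (j+2+2) + narayana (j+2)" by (rule nar_rec)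
    have e3: "narayana (j+1+3) = narayana (j+1+2) + narayana (j+1)" by (rule nar_rec)
    have e4: "narayana (j+3) = narayana (j+2) + narayana j" by (rule nar_rec)
    show ?thesis using e1 h1 h2 j e2 e3 e4
      by (simp add: BB_def algebra_simps numeral_3_eq_3 numeral_2_eq_2 add.assoc)
  qed
qed

lemma cube_ids:
  fixes r e0 e1 e2 x0 x1 x2 x3 x4 y0 y1 y2 :: int
  assumes "x0 = 27*r*24 + 27*27*r*e0" "x1 = 1 + 27*r*16 + 27*27*r*e1" "x2 = 1 + 27*r*33 + 27*27*r*e2"
    "x3 = x2 + x0" "x4 = x3 + x1"
    "y0 = BB x0 x1 x2 x0 x1 x2" "y1 = BB x0 x1 x2 x1 x2 x3" "y2 = BB x0 x1 x2 x2 x3 x4"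
  shows "[BB y0 y1 y2 x0 x1 x2 = 3*(27*r)*24] (mod 81*(27*r))"
    "[BB y0 y1 y2 x1 x2 x3 = 1 + 3*(27*r)*16] (mod 81*(27*r))"
    "[BB y0 y1 y2 x2 x3 x4 = 1 + 3*(27*r)*33] (mod 81*(27*r))"
proof -
  have "BB y0 y1 y2 x0 x1 x2 = 3*(27*r)*24 + 81*(27*r)*((1)*e0 + (481)*r + (918)*r*e2 + (729)*r*e2^2 + (378)*r*e1 + (-1458)*r*e1*e2 + (729)*r*e1^2 + (-432)*r*e0 + (1458)*r*e0*e1 + (-729)*r*e0^2 + (243432)*r^2 + (221616)*r^2*e2 + (-157464)*r^2*e2^2 + (129033)*r^2*e1 + (984150)*r^2*e1*e2 + (531441)*r^2*e1*e2^2 + (-354294)*r^2*e1^2 + (-1062882)*r^2*e1^2*e2 + (531441)*r^2*e1^3 + (430839)*r^2*e0 + (275562)*r^2*e0*e2 + (-531441)*r^2*e0*e2^2 + (-590490)*r^2*e0*e1 + (1062882)*r^2*e0*e1*e2 + (492075)*r^2*e0^2 + (531441)*r^2*e0^2*e2 + (-1062882)*r^2*e0^2*e1 + (177147)*r^2*e0^3)"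
    unfolding assms BB_def by algebra
  then show "[BB y0 y1 y2 x0 x1 x2 = 3*(27*r)*24] (mod 81*(27*r))" by (metis cong_iff_lin cong_sym)
  have "BB y0 y1 y2 x1 x2 x3 = 1 + 3*(27*r)*16 + 81*(27*r)*((1)*e1 + (1072)*r + (1296)*r*e2 + (-432)*r*e1 + (729)*r*e1^2 + (918)*r*e0 + (1458)*r*e0*e2 + (-1458)*r*e0*e1 + (293625)*r^2 + (350649)*r^2*e2 + (334611)*r^2*e2^2 + (177147)*r^2*e2^3 + (430839)*r^2*e1 + (275562)*r^2*e1*e2 + (-531441)*r^2*e1*e2^2 + (-295245)*r^2*e1^2 + (531441)*r^2*e1^2*e2 + (221616)*r^2*e0 + (-314928)*r^2*e0*e2 + (984150)*r^2*e0*e1 + (1062882)*r^2*e0*e1*e2 + (-1062882)*r^2*e0*e1^2 + (137781)*r^2*e0^2 + (-531441)*r^2*e0^2*e2 + (531441)*r^2*e0^2*e1 + (177147)*r^2*e0^3)"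
    unfolding assms BB_def by algebra
  then show "[BB y0 y1 y2 x1 x2 x3 = 1 + 3*(27*r)*16] (mod 81*(27*r))" by (metis cong_iff_lin cong_sym)
  have "BB y0 y1 y2 x2 x3 x4 = 1 + 3*(27*r)*33 + 81*(27*r)*((1)*e2 + (1376)*r + (864)*r*e2 + (918)*r*e1 + (1458)*r*e1*e2 + (-729)*r*e1^2 + (1296)*r*e0 + (729)*r*e0^2 + (466056)*r^2 + (781488)*r^2*e2 + (472392)*r^2*e2^2 + (221616)*r^2*e1 + (-314928)*r^2*e1*e2 + (492075)*r^2*e1^2 + (531441)*r^2*e1^2*e2 + (-354294)*r^2*e1^3 + (350649)*r^2*e0 + (669222)*r^2*e0*e2 + (531441)*r^2*e0*e2^2 + (275562)*r^2*e0*e1 + (-1062882)*r^2*e0*e1*e2 + (531441)*r^2*e0*e1^2 + (-157464)*r^2*e0^2 + (531441)*r^2*e0^2*e1 + (-177147)*r^2*e0^3)"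
    unfolding assms BB_def by algebra
  then show "[BB y0 y1 y2 x2 x3 x4 = 1 + 3*(27*r)*33] (mod 81*(27*r))" by (metis cong_iff_lin cong_sym)
qed

lemma add_ids:
  fixes r t e0 e1 e2 f0 f1 f2 x0 x1 x2 x3 x4 z0 z1 z2 :: int
  assumes "x0 = 27*r*24 + 27*27*r*e0" "x1 = 1 + 27*r*16 + 27*27*r*e1" "x2 = 1 + 27*r*33 + 27*27*r*e2"
    "x3 = x2 + x0" "x4 = x3 + x1"
    "z0 = t*(27*r)*24 + 27*27*r*f0" "z1 = 1 + t*(27*r)*16 + 27*27*r*f1" "z2 = 1 + t*(27*r)*33 + 27*27*r*f2"
  shows "[BB z0 z1 z2 x0 x1 x2 = (t+1)*(27*r)*24] (mod 27*27*r)"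
    "[BB z0 z1 z2 x1 x2 x3 = 1 + (t+1)*(27*r)*16] (mod 27*27*r)"
    "[BB z0 z1 z2 x2 x3 x4 = 1 + (t+1)*(27*r)*33] (mod 27*27*r)"
proof -
  have "BB z0 z1 z2 x0 x1 x2 = (t+1)*(27*r)*24 + 27*27*r*((1)*f0 + (1)*e0 + (459)*r*f2 + (189)*r*f1 + (-216)*r*f0 + (729)*r*e2*f2 + (-729)*r*e2*f1 + (-729)*r*e1*f2 + (729)*r*e1*f1 + (729)*r*e1*f0 + (729)*r*e0*f1 + (-729)*r*e0*f0 + (481)*r*t + (459)*r*t*e2 + (189)*r*t*e1 + (-216)*r*t*e0)"
    unfolding assms BB_def by algebra
  then show "[BB z0 z1 z2 x0 x1 x2 = (t+1)*(27*r)*24] (mod 27*27*r)" by (metis cong_iff_lin cong_sym)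
  have "BB z0 z1 z2 x1 x2 x3 = 1 + (t+1)*(27*r)*16 + 27*27*r*((1)*f1 + (1)*e1 + (648)*r*f2 + (-216)*r*f1 + (459)*r*f0 + (729)*r*e2*f0 + (729)*r*e1*f1 + (-729)*r*e1*f0 + (729)*r*e0*f2 + (-729)*r*e0*f1 + (1072)*r*t + (648)*r*t*e2 + (-216)*r*t*e1 + (459)*r*t*e0)"
    unfolding assms BB_def by algebra
  then show "[BB z0 z1 z2 x1 x2 x3 = 1 + (t+1)*(27*r)*16] (mod 27*27*r)" by (metis cong_iff_lin cong_sym)
  have "BB z0 z1 z2 x2 x3 x4 = 1 + (t+1)*(27*r)*33 + 27*27*r*((1)*f2 + (1)*e2 + (432)*r*f2 + (459)*r*f1 + (648)*r*f0 + (729)*r*e2*f1 + (729)*r*e1*f2 + (-729)*r*e1*f1 + (729)*r*e0*f0 + (1376)*r*t + (432)*r*t*e2 + (459)*r*t*e1 + (648)*r*t*e0)"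
    unfolding assms BB_def by algebra
  then show "[BB z0 z1 z2 x2 x3 x4 = 1 + (t+1)*(27*r)*33] (mod 27*27*r)" by (metis cong_iff_lin cong_sym)
qed

lemma nar_add3: "m + k = t \<Longrightarrow> m1 = m+1 \<Longrightarrow> m2 = m+2 \<Longrightarrow> k1 = k+1 \<Longrightarrow> k2 = k+2 \<Longrightarrow>
  narayana t = BB (narayana m) (narayana m1) (narayana m2) (narayana k) (narayana k1) (narayana k2)"
  using nar_add by blast

lemma nar_rec3: "t = k+3 \<Longrightarrow> t2 = k+2 \<Longrightarrow> narayana t = narayana t2 + narayana k"
  using nar_rec by blast

fun nar3 :: "nat \<Rightarrow> int \<times> int \<times> int" where
  "nar3 0 = (0, 1, 1)"
| "nar3 (Suc k) = (case nar3 k of (x, y, z) \<Rightarrow> (y, z, z + x))"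

lemma nar3_eq: "nar3 k = (narayana k, narayana (k+1), narayana (k+2))"
  by (induction k) (simp_all add: nar_rec[simplified numeral_3_eq_3, simplified])

lemma base_vals: "narayana 72 = 374009739309 \<and> narayana 73 = 548137914373 \<and> narayana 74 = 803335158406"
proof -
  have "nar3 72 = (374009739309, 548137914373, 803335158406)" by code_simp
  then show ?thesis using nar3_eq[of 72] by simp
qed

lemma cong_from: "[a = b] (mod m) \<Longrightarrow> \<exists>e. a = b + m * (e::int)"
  by (metis cong_iff_lin cong_sym)

lemma level:
  assumes "n \<ge> 2"
  shows "[narayana (8*3^n) = 3^(n+1)*24] (mod 3^(n+4)) \<and>
         [narayana (8*3^n+1) = 1 + 3^(n+1)*16] (mod 3^(n+4)) \<and>
         [narayana (8*3^n+2) = 1 + 3^(n+1)*33] (mod 3^(n+4))"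
  using assms
proof (induction n rule: dec_induct)
  case base
  show ?case using base_vals by (simp add: cong_def)
next
  case (step n)
  define N :: nat where "N = 8*3^n"
  define r :: int where "r = 3^(n-2)"
  have nn: "n+1 = (n-2)+3" using step(1) by simp
  have p: "(3::int)^(n+1) = 27*r" unfolding r_def nn power_add by simp
  have p4: "(3::int)^(n+4) = 27*27*r" using p by (simp add: power_add)
  have p2: "(3::int)^(Suc n+1) = 3*(27*r)" using p by simp
  have p5: "(3::int)^(Suc n+4) = 81*(27*r)" using p by (simp add: power_add)
  obtain e0 where x0: "narayana N = 27*r*24 + 27*27*r*e0"
    using cong_from[OF conjunct1[OF step(3)]] unfolding N_def p p4 by (auto simp: algebra_simps)
  obtain e1 where x1: "narayana (N+1) = 1 + 27*r*16 + 27*27*r*e1"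
    using cong_from[OF conjunct1[OF conjunct2[OF step(3)]]] unfolding N_def p p4 by (auto simp: algebra_simps)
  obtain e2 where x2: "narayana (N+2) = 1 + 27*r*33 + 27*27*r*e2"
    using cong_from[OF conjunct2[OF conjunct2[OF step(3)]]] unfolding N_def p p4 by (auto simp: algebra_simps)
  have x3: "narayana (N+3) = narayana (N+2) + narayana N" by (rule nar_rec3) simp_all
  have x4: "narayana (N+4) = narayana (N+3) + narayana (N+1)" by (rule nar_rec3) simp_all
  have y0: "narayana (2*N) = BB (narayana N) (narayana (N+1)) (narayana (N+2)) (narayana N) (narayana (N+1)) (narayana (N+2))"
    by (rule nar_add3) simp_all
  have y1: "narayana (2*N+1) = BB (narayana N) (narayana (N+1)) (narayana (N+2)) (narayana (N+1)) (narayana (N+2)) (narayana (N+3))"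
    by (rule nar_add3) simp_all
  have y2: "narayana (2*N+2) = BB (narayana N) (narayana (N+1)) (narayana (N+2)) (narayana (N+2)) (narayana (N+3)) (narayana (N+4))"
    by (rule nar_add3) simp_all
  have z0: "narayana (3*N) = BB (narayana (2*N)) (narayana (2*N+1)) (narayana (2*N+2)) (narayana N) (narayana (N+1)) (narayana (N+2))"
    by (rule nar_add3) simp_all
  have z1: "narayana (3*N+1) = BB (narayana (2*N)) (narayana (2*N+1)) (narayana (2*N+2)) (narayana (N+1)) (narayana (N+2)) (narayana (N+3))"
    by (rule nar_add3) simp_all
  have z2: "narayana (3*N+2) = BB (narayana (2*N)) (narayana (2*N+1)) (narayana (2*N+2)) (narayana (N+2)) (narayana (N+3)) (narayana (N+4))"
    by (rule nar_add3) simp_all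
  note C = cube_ids[OF x0 x1 x2 x3 x4 y0 y1 y2]
  have N3: "8 * 3 ^ Suc n = 3*N" unfolding N_def by simp
  show ?case unfolding N3 p2 p5 z0 z1 z2 using C by blast
qed

lemma multi:
  assumes "n \<ge> 2"
  shows "[narayana (s*(8*3^n)) = int s*3^(n+1)*24] (mod 3^(n+4)) \<and>
         [narayana (s*(8*3^n)+1) = 1 + int s*3^(n+1)*16] (mod 3^(n+4)) \<and>
         [narayana (s*(8*3^n)+2) = 1 + int s*3^(n+1)*33] (mod 3^(n+4))"
proof (induction s)
  case 0
  then show ?case by (simp add: cong_def)
next
  case (Suc s)
  define N :: nat where "N = 8*3^n"
  define r :: int where "r = 3^(n-2)"
  have nn: "n+1 = (n-2)+3" using assms by simp
  have p: "(3::int)^(n+1) = 27*r" unfolding r_def nn power_add by simp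
  have p4: "(3::int)^(n+4) = 27*27*r" using p by (simp add: power_add)
  note L = level[OF assms]
  obtain e0 where x0: "narayana N = 27*r*24 + 27*27*r*e0"
    using cong_from[OF conjunct1[OF L]] unfolding N_def p p4 by (auto simp: algebra_simps)
  obtain e1 where x1: "narayana (N+1) = 1 + 27*r*16 + 27*27*r*e1"
    using cong_from[OF conjunct1[OF conjunct2[OF L]]] unfolding N_def p p4 by (auto simp: algebra_simps)
  obtain e2 where x2: "narayana (N+2) = 1 + 27*r*33 + 27*27*r*e2"
    using cong_from[OF conjunct2[OF conjunct2[OF L]]] unfolding N_def p p4 by (auto simp: algebra_simps)
  obtain f0 where w0: "narayana (s*N) = int s*(27*r)*24 + 27*27*r*f0"
    using cong_from[OF conjunct1[OF Suc]] unfolding N_def p p4 by (auto simp: algebra_simps)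
  obtain f1 where w1: "narayana (s*N+1) = 1 + int s*(27*r)*16 + 27*27*r*f1"
    using cong_from[OF conjunct1[OF conjunct2[OF Suc]]] unfolding N_def p p4 by (auto simp: algebra_simps)
  obtain f2 where w2: "narayana (s*N+2) = 1 + int s*(27*r)*33 + 27*27*r*f2"
    using cong_from[OF conjunct2[OF conjunct2[OF Suc]]] unfolding N_def p p4 by (auto simp: algebra_simps)
  have x3: "narayana (N+3) = narayana (N+2) + narayana N" by (rule nar_rec3) simp_all
  have x4: "narayana (N+4) = narayana (N+3) + narayana (N+1)" by (rule nar_rec3) simp_all
  have z0: "narayana (Suc s*N) = BB (narayana (s*N)) (narayana (s*N+1)) (narayana (s*N+2)) (narayana N) (narayana (N+1)) (narayana (N+2))"
    by (rule nar_add3) simp_all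
  have z1: "narayana (Suc s*N+1) = BB (narayana (s*N)) (narayana (s*N+1)) (narayana (s*N+2)) (narayana (N+1)) (narayana (N+2)) (narayana (N+3))"
    by (rule nar_add3) simp_all
  have z2: "narayana (Suc s*N+2) = BB (narayana (s*N)) (narayana (s*N+1)) (narayana (s*N+2)) (narayana (N+2)) (narayana (N+3)) (narayana (N+4))"
    by (rule nar_add3) simp_all
  note C = add_ids[OF x0 x1 x2 x3 x4 w0 w1 w2]
  show ?case unfolding N_def[symmetric] p p4 z0 z1 z2 using C by (simp add: algebra_simps)
qed

theorem proposition3p4:
  fixes s n :: nat
  assumes "s \<ge> 1" and "n \<ge> 2"
  shows "[narayana (8 * s * 3 ^ n) = 3 ^ (n + 3) * 2 * int s + 3 ^ (n + 2) * 2 * int s] (mod 3 ^ (n + 4)) \<and>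
         [narayana (8 * s * 3 ^ n + 1) = 3 ^ (n + 2) * 5 * int s + 3 ^ (n + 1) * int s + 1] (mod 3 ^ (n + 4)) \<and>
         [narayana (8 * s * 3 ^ n + 2) = 3 ^ (n + 3) * 2 * int s + 3 ^ (n + 2) * 5 * int s + 1] (mod 3 ^ (n + 4))"
proof -
  have e: "8 * s * 3 ^ n = s * (8 * 3 ^ n)" by simp
  have t0: "(3::int) ^ (n + 3) * 2 * int s + 3 ^ (n + 2) * 2 * int s = int s*3^(n+1)*24"
    by (simp add: power_add algebra_simps)
  have t1: "(3::int) ^ (n + 2) * 5 * int s + 3 ^ (n + 1) * int s + 1 = 1 + int s*3^(n+1)*16"
    by (simp add: power_add algebra_simps)
  have t2: "(3::int) ^ (n + 3) * 2 * int s + 3 ^ (n + 2) * 5 * int s + 1 = 1 + int s*3^(n+1)*33"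
    by (simp add: power_add algebra_simps)
  show ?thesis unfolding e t0 t1 t2 using multi[OF assms(2)] by blast
qed

end
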